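(* Let $p\in\mathcal{X}$. If $q_1,q_2\in\mathcal{X}$ are two pathless polynomials with $p\equiv q_1\pmod{\mathcal{J}}$ and $p\equiv q_2\pmod{\mathcal{J}}$, then $D(q_1)=D(q_2)$. In other words, for pathless $q$ with $p\equiv q\pmod{\mathcal J}$, the value $D(q)$ depends only on $\alpha$, $\beta$ and $p$, not on the choice of $q$.
   Context: Let $\mathbf{k}$ be a commutative ring, let $\beta,\alpha\in\mathbf{k}$, and let $n$ be a positive integer; write $[m]=\{1,2,\dots,m\}$. Let $\mathcal{X}=\mathbf{k}[x_{i,j}\mid 1\le i<j\le n]$ be the polynomial ring over $\mathbf{k}$ in the $n(n-1)/2$ indeterminates $x_{i,j}$, and let $\mathfrak{M}$ be the set of monomials (without coefficients) in these indeterminates. Let $\mathcal{J}$ be the ideal of $\mathcal{X}$ generated by all elements $x_{i,j}x_{j,k}-x_{i,k}(x_{i,j}+x_{j,k}+\beta)-\alpha$ for $1\le i<j<k\le n$. A monomial $\mathfrak{m}\in\mathfrak{M}$ is pathless if there is no triple $(i,j,k)$ with $1\le i<j<k\le n$ and $x_{i,j}x_{j,k}\mid\mathfrak{m}$. A polynomial in $\mathcal{X}$ is pathless if it is a $\mathbf{k}$-linear combination of pathless monomials. Let $\mathcal{T}'=\mathbf{k}[t_1,\dots,t_{n-1}]$ and let $D:\mathcal{X}\to\mathcal{T}'$ be the $\mathbf{k}$-algebra homomorphism with $D(x_{i,j})=t_i$ for all $1\le i<j\le n$. *)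

theory Defs
  imports "HOL-Library.Poly_Mapping"
begin

text \<open>Multivariate polynomials are represented in the standard way via Poly_Mapping:
  a monomial in the indeterminates x_{i,j} (indexed by pairs (i,j)) is a finitely supported
  exponent map from pairs to nat; a polynomial is a finitely supported map from
  monomials to coefficients.  Similarly for T' = k[t_1,...,t_{n-1}] with variables indexed by nat.\<close>

type_synonym monoX = "(nat \<times> nat) \<Rightarrow>\<^sub>0 nat"
type_synonym 'a polyX = "monoX \<Rightarrow>\<^sub>0 'a"
type_synonym 'a polyT = "(nat \<Rightarrow>\<^sub>0 nat) \<Rightarrow>\<^sub>0 'a"

definition varsX :: "nat \<Rightarrow> (nat \<times> nat) set" where
  "varsX n = {(i, j). 1 \<le> i \<and> i < j \<and> j \<le> n}"

definition inX :: "nat \<Rightarrow> 'a::comm_ring_1 polyX \<Rightarrow> bool" where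
  "inX n (p :: 'a polyX) \<longleftrightarrow> (\<forall>m \<in> Poly_Mapping.keys p. Poly_Mapping.keys (m :: monoX) \<subseteq> varsX n)"

definition xvar :: "nat \<Rightarrow> nat \<Rightarrow> 'a::comm_ring_1 polyX" where
  "xvar i j = Poly_Mapping.single (Poly_Mapping.single (i, j) 1) 1"

definition constX :: "'a::comm_ring_1 \<Rightarrow> 'a polyX" where
  "constX c = Poly_Mapping.single 0 c"

definition triples :: "nat \<Rightarrow> (nat \<times> nat \<times> nat) set" where
  "triples n = {(i, j, k). 1 \<le> i \<and> i < j \<and> j < k \<and> k \<le> n}"

definition genJ :: "'a::comm_ring_1 \<Rightarrow> 'a \<Rightarrow> nat \<times> nat \<times> nat \<Rightarrow> 'a polyX" where
  "genJ \<beta> \<alpha> t = (case t of (i, j, k) \<Rightarrow>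
     xvar i j * xvar j k - xvar i k * (xvar i j + xvar j k + constX \<beta>) - constX \<alpha>)"

definition idealJ :: "nat \<Rightarrow> 'a::comm_ring_1 \<Rightarrow> 'a \<Rightarrow> 'a polyX set" where
  "idealJ n \<beta> \<alpha> = {(\<Sum>t \<in> triples n. c t * genJ \<beta> \<alpha> t) | c. \<forall>t \<in> triples n. inX n (c t)}"

definition pathless_mono :: "nat \<Rightarrow> monoX \<Rightarrow> bool" where
  "pathless_mono n m \<longleftrightarrow>
     \<not> (\<exists>i j k. 1 \<le> i \<and> i < j \<and> j < k \<and> k \<le> n \<and>
                 Poly_Mapping.lookup m (i, j) \<ge> 1 \<and> Poly_Mapping.lookup m (j, k) \<ge> 1)"

definition pathless :: "nat \<Rightarrow> 'a::comm_ring_1 polyX \<Rightarrow> bool" where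
  "pathless n (q :: 'a polyX) \<longleftrightarrow> (\<forall>m \<in> Poly_Mapping.keys q. pathless_mono n m)"

definition tvar :: "nat \<Rightarrow> 'a::comm_ring_1 polyT" where
  "tvar i = Poly_Mapping.single (Poly_Mapping.single i 1) 1"

definition D :: "'a::comm_ring_1 polyX \<Rightarrow> 'a polyT" where
  "D q = (\<Sum>m \<in> Poly_Mapping.keys q. Poly_Mapping.single 0 (Poly_Mapping.lookup q m) *
            (\<Prod>v \<in> Poly_Mapping.keys m. tvar (fst v) ^ Poly_Mapping.lookup m v))"

end

theory Submission
  imports Defs
begin

abbreviation "keysP \<equiv> Poly_Mapping.keys"
abbreviation "lkp \<equiv> Poly_Mapping.lookup"
abbreviation "sgl \<equiv> Poly_Mapping.single"

lemma poly_expand: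
  fixes P :: "'k \<Rightarrow>\<^sub>0 'b::comm_monoid_add"
  shows "P = (\<Sum>e\<in>keysP P. sgl e (lkp P e))"
proof (rule poly_mapping_eqI)
  fix x
  show "lkp P x = lkp (\<Sum>e\<in>keysP P. sgl e (lkp P e)) x"
    by (simp add: lookup_sum lookup_single when_def in_keys_iff)
qed

definition substm :: "('k \<Rightarrow> 'k) \<Rightarrow> ('k \<Rightarrow>\<^sub>0 'b::comm_ring_1) \<Rightarrow> ('k \<Rightarrow>\<^sub>0 'b)" where
  "substm \<sigma> P = (\<Sum>e\<in>keysP P. sgl (\<sigma> e) (lkp P e))"

lemma substm_superset:
  assumes "finite K" "keysP P \<subseteq> K"
  shows "substm \<sigma> P = (\<Sum>e\<in>K. sgl (\<sigma> e) (lkp P e))"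
  unfolding substm_def
  by (rule sum.mono_neutral_left) (use assms in \<open>auto simp: in_keys_iff\<close>)

lemma substm_add: "substm \<sigma> (P + Q) = substm \<sigma> P + substm \<sigma> Q"
proof -
  let ?K = "keysP P \<union> keysP Q"
  have "substm \<sigma> (P + Q) = (\<Sum>e\<in>?K. sgl (\<sigma> e) (lkp (P+Q) e))"
    by (rule substm_superset) (auto simp: keys_add)
  also have "\<dots> = (\<Sum>e\<in>?K. sgl (\<sigma> e) (lkp P e)) + (\<Sum>e\<in>?K. sgl (\<sigma> e) (lkp Q e))"
    by (simp add: lookup_add single_add sum.distrib)
  also have "\<dots> = substm \<sigma> P + substm \<sigma> Q"
    by (subst (1 2) substm_superset[where K="?K"]) auto
  finally show ?thesis .
qed

lemma substm_zero [simp]: "substm \<sigma> 0 = 0"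
  by (simp add: substm_def)

lemma substm_single [simp]: "substm \<sigma> (sgl e c) = sgl (\<sigma> e) c"
  by (simp add: substm_def)

lemma substm_sum: "substm \<sigma> (sum F A) = (\<Sum>x\<in>A. substm \<sigma> (F x))"
  by (induction A rule: infinite_finite_induct) (auto simp: substm_add)

lemma substm_uminus: "substm \<sigma> (- P) = - substm \<sigma> P"
  using substm_add[of \<sigma> P "-P"] by (simp add: add_eq_0_iff2)

lemma substm_diff: "substm \<sigma> (P - Q) = substm \<sigma> P - substm \<sigma> Q"
  using substm_add[of \<sigma> P "-Q"] substm_uminus[of \<sigma> Q] by simp

lemma substm_mult:
  fixes \<sigma> :: "'k::comm_monoid_add \<Rightarrow> 'k"
  assumes hom: "\<And>a b. \<sigma> (a + b) = \<sigma> a + \<sigma> b"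
  shows "substm \<sigma> (P * Q) = substm \<sigma> P * substm \<sigma> (Q :: 'k \<Rightarrow>\<^sub>0 'b::comm_ring_1)"
proof -
  have "P * Q = (\<Sum>a\<in>keysP P. sgl a (lkp P a)) * (\<Sum>b\<in>keysP Q. sgl b (lkp Q b))"
    by (subst (1) poly_expand, subst (2) poly_expand) (rule refl)
  also have "\<dots> = (\<Sum>a\<in>keysP P. \<Sum>b\<in>keysP Q. sgl (a + b) (lkp P a * lkp Q b))"
    by (simp add: sum_product mult_single)
  finally have PQ: "P * Q = \<dots>" .
  have "substm \<sigma> (P * Q) = (\<Sum>a\<in>keysP P. \<Sum>b\<in>keysP Q. sgl (\<sigma> a + \<sigma> b) (lkp P a * lkp Q b))"
    by (simp add: PQ substm_sum hom)
  also have "\<dots> = (\<Sum>a\<in>keysP P. sgl (\<sigma> a) (lkp P a)) * (\<Sum>b\<in>keysP Q. sgl (\<sigma> b) (lkp Q b))"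
    by (simp add: sum_product mult_single)
  also have "\<dots> = substm \<sigma> P * substm \<sigma> Q" by (simp add: substm_def)
  finally show ?thesis .
qed

lemma substm_comp: "substm \<sigma> (substm \<tau> P) = substm (\<sigma> \<circ> \<tau>) P"
  by (simp add: substm_def[of \<tau>] substm_sum) (simp add: substm_def)

lemma substm_cong: "(\<And>e. \<sigma> e = \<tau> e) \<Longrightarrow> substm \<sigma> P = substm \<tau> P"
  by (simp add: substm_def)

lemma substm_id_on: "(\<And>e. e \<in> keysP P \<Longrightarrow> \<sigma> e = e) \<Longrightarrow> substm \<sigma> P = P"
  unfolding substm_def by (subst (2) poly_expand) (rule sum.cong, auto)

subsection \<open>Substitution t_j := t_i\<close>

definition sig :: "nat \<Rightarrow> nat \<Rightarrow> (nat \<Rightarrow>\<^sub>0 nat) \<Rightarrow> (nat \<Rightarrow>\<^sub>0 nat)" where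
  "sig j i e = Poly_Mapping.update j 0 e + sgl i (lkp e j)"

lemma lookup_sig: "lkp (sig j i e) l = (if l = j then 0 else lkp e l) + (if l = i then lkp e j else 0)"
  by (simp add: sig_def lookup_add lookup_update lookup_single when_def)

lemma sig_add: "sig j i (a + b) = sig j i a + sig j i b"
  by (rule poly_mapping_eqI) (simp add: lookup_sig lookup_add)

lemma sig_0 [simp]: "sig j i 0 = 0"
  by (rule poly_mapping_eqI) (simp add: lookup_sig)

definition S :: "nat \<Rightarrow> nat \<Rightarrow> 'a::comm_ring_1 polyT \<Rightarrow> 'a polyT" where
  "S j i = substm (sig j i)"

definition C :: "'a::comm_ring_1 \<Rightarrow> 'a polyT" where "C c = sgl 0 c"

lemma S_add: "S j i (P + Q) = S j i P + S j i Q" by (simp add: S_def substm_add)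
lemma S_diff: "S j i (P - Q) = S j i P - S j i Q" by (simp add: S_def substm_diff)
lemma S_uminus: "S j i (- P) = - S j i P" by (simp add: S_def substm_uminus)
lemma S_mult: "S j i (P * Q) = S j i P * S j i Q" by (simp add: S_def substm_mult sig_add)
lemma S_C: "S j i (C c) = C c" by (simp add: S_def C_def)
lemma S_one: "S j i 1 = 1" using S_C[of j i 1] by (simp add: C_def)
lemma S_zero: "S j i 0 = 0" by (simp add: S_def)
lemma S_power: "S j i (P ^ n) = S j i P ^ n" by (induction n) (simp_all add: S_one S_mult)

lemma S_tvar: "S j i (tvar l) = (if l = j then tvar i else tvar l)"
proof -
  have "sig j i (sgl l 1) = (if l = j then sgl i 1 else sgl l 1)"
    by (rule poly_mapping_eqI) (simp add: lookup_sig lookup_single when_def)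
  then show ?thesis by (simp add: S_def tvar_def)
qed

lemma S_tvar_same [simp]: "S j i (tvar j) = tvar i" by (simp add: S_tvar)
lemma S_tvar_other [simp]: "l \<noteq> j \<Longrightarrow> S j i (tvar l) = tvar l" by (simp add: S_tvar)

lemma S_prod: "S j i (prod F A) = (\<Prod>x\<in>A. S j i (F x))"
  by (induction A rule: infinite_finite_induct) (simp_all add: S_one S_mult)

lemma S_comp: "S a b (S c d P) = substm (sig a b \<circ> sig c d) P"
  by (simp add: S_def substm_comp)

lemma S_SS1: "c \<noteq> d \<Longrightarrow> S c b (S c d P) = S c d P"
proof -
  assume cd: "c \<noteq> d"
  have "S c b (S c d P) = substm (sig c b \<circ> sig c d) P" by (rule S_comp)
  also have "\<dots> = substm (sig c d) P"
    by (rule substm_cong) (rule poly_mapping_eqI, use cd in \<open>simp add: lookup_sig\<close>)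
  finally show ?thesis by (simp add: S_def)
qed

lemma S_SS2: "i \<noteq> j \<Longrightarrow> j \<noteq> k \<Longrightarrow> i \<noteq> k \<Longrightarrow> S j i (S k j P) = S j i (S k i P)"
  unfolding S_comp
  by (rule substm_cong) (rule poly_mapping_eqI, simp add: lookup_sig)

lemma S_commute: "b \<noteq> d \<Longrightarrow> a \<noteq> d \<Longrightarrow> c \<noteq> b \<Longrightarrow> S b a (S d c P) = S d c (S b a P)"
  unfolding S_comp
  by (rule substm_cong) (rule poly_mapping_eqI, simp add: lookup_sig)

lemma tvar_pow: "(tvar l :: 'a::comm_ring_1 polyT) ^ b = sgl (sgl l b) 1"
proof (induction b)
  case 0 then show ?case by simp
next
  case (Suc b)
  then show ?case by (simp add: tvar_def mult_single single_add[symmetric])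
qed

subsection \<open>Divided differences\<close>

definition H :: "nat \<Rightarrow> nat \<Rightarrow> nat \<Rightarrow> 'a::comm_ring_1 polyT" where
  "H j i b = (\<Sum>l<b. tvar i ^ (b - Suc l) * tvar j ^ l)"

definition dlt :: "nat \<Rightarrow> nat \<Rightarrow> 'a::comm_ring_1 polyT \<Rightarrow> 'a polyT" where
  "dlt j i P = (\<Sum>e\<in>keysP P. sgl (Poly_Mapping.update j 0 e) (lkp P e) * H j i (lkp e j))"

lemma dlt_char: "(tvar j - tvar i) * dlt j i P = P - S j i P"
proof -
  have eq1: "Poly_Mapping.update j 0 e + sgl j (lkp e j) = e" for e :: "nat \<Rightarrow>\<^sub>0 nat"
    by (rule poly_mapping_eqI) (simp add: lookup_add lookup_update lookup_single when_def)
  have "(tvar j - tvar i) * dlt j i P =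
     (\<Sum>e\<in>keysP P. sgl (Poly_Mapping.update j 0 e) (lkp P e) * ((tvar j - tvar i) * H j i (lkp e j)))"
    by (simp add: dlt_def sum_distrib_left mult_ac)
  also have "\<dots> = (\<Sum>e\<in>keysP P. sgl (Poly_Mapping.update j 0 e) (lkp P e) * (tvar j ^ lkp e j - tvar i ^ lkp e j))"
    by (simp add: H_def power_diff_sumr2)
  also have "\<dots> = (\<Sum>e\<in>keysP P. sgl e (lkp P e) - sgl (sig j i e) (lkp P e))"
    by (rule sum.cong) (simp_all add: right_diff_distrib tvar_pow mult_single eq1 sig_def)
  also have "\<dots> = P - S j i P"
    by (simp add: sum_subtractf S_def substm_def flip: poly_expand)
  finally show ?thesis .
qed

lemma lookup_single_mult:
  "lkp (sgl a (1::'b::comm_ring_1) * Q) k = (\<Sum>q. lkp Q q when k = a + q)"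
  by (simp add: lookup_mult lookup_single when_mult)

lemma tvar_cancel0:
  assumes ij: "i \<noteq> j" and eq: "(tvar j - tvar i) * Q = (0 :: 'a::comm_ring_1 polyT)"
  shows "Q = 0"
proof (rule ccontr)
  assume "Q \<noteq> 0"
  then have ne: "keysP Q \<noteq> {}" by simp
  define M where "M = Max ((\<lambda>e. lkp e j) ` keysP Q)"
  have "M \<in> (\<lambda>e. lkp e j) ` keysP Q" unfolding M_def by (rule Max_in) (use ne in auto)
  then obtain e where e: "e \<in> keysP Q" "lkp e j = M" by auto
  have mx: "lkp e' j \<le> M" if "e' \<in> keysP Q" for e'
    unfolding M_def by (rule Max_ge) (use that in auto)
  have 1: "lkp (tvar j * Q) (sgl j 1 + e) = lkp Q e"
    by (simp add: tvar_def lookup_single_mult)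
  have 2: "lkp (tvar i * Q) (sgl j 1 + e) = 0"
  proof -
    have Z: "(\<lambda>q. lkp Q q when sgl j 1 + e = sgl i 1 + q) = (\<lambda>q. 0)"
    proof
      fix q :: "nat \<Rightarrow>\<^sub>0 nat"
      show "(lkp Q q when sgl j 1 + e = sgl i 1 + q) = 0"
      proof (cases "sgl j 1 + e = sgl i 1 + q")
        case True
        then have "lkp (sgl j 1 + e) j = lkp (sgl i 1 + q) j" by simp
        then have "lkp q j = Suc (lkp e j)" using ij by (simp add: lookup_add lookup_single when_def)
        then have "q \<notin> keysP Q" using mx e(2) by fastforce
        then show ?thesis by (simp add: in_keys_iff)
      qed simp
    qed
    then have "(\<Sum>q. lkp Q q when sgl j 1 + e = sgl i 1 + q) = 0" by (subst Z) simp
    then show ?thesis by (simp add: tvar_def lookup_single_mult)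
  qed
  have "lkp ((tvar j - tvar i) * Q) (sgl j 1 + e) = lkp Q e"
    using 1 2 by (simp add: left_diff_distrib lookup_minus)
  then show False using eq e(1) by (simp add: in_keys_iff)
qed

lemma tvar_cancel:
  assumes "i \<noteq> j" and "(tvar j - tvar i) * Q1 = (tvar j - tvar i) * (Q2 :: 'a::comm_ring_1 polyT)"
  shows "Q1 = Q2"
  using tvar_cancel0[of i j "Q1 - Q2"] assms by (simp add: right_diff_distrib)

lemma dlt_add: "i \<noteq> j \<Longrightarrow> dlt j i (P + Q) = dlt j i P + dlt j i Q"
  by (rule tvar_cancel[of i j]) (simp_all add: dlt_char distrib_left S_add)

lemma dlt_uminus: "i \<noteq> j \<Longrightarrow> dlt j i (- P) = - dlt j i P"
  by (rule tvar_cancel[of i j]) (simp_all add: dlt_char S_uminus)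

lemma dlt_diff: "i \<noteq> j \<Longrightarrow> dlt j i (P - Q) = dlt j i P - dlt j i Q"
  by (rule tvar_cancel[of i j]) (simp_all add: dlt_char right_diff_distrib S_diff)

lemma dlt_zero: "i \<noteq> j \<Longrightarrow> dlt j i 0 = 0"
  by (rule tvar_cancel[of i j]) (simp_all add: dlt_char S_zero)

lemma dlt_leibniz:
  assumes "i \<noteq> j"
  shows "dlt j i (P * Q) = dlt j i P * Q + S j i P * dlt j i Q"
proof (rule tvar_cancel[OF assms])
  have "(tvar j - tvar i) * (dlt j i P * Q + S j i P * dlt j i Q)
      = ((tvar j - tvar i) * dlt j i P) * Q + S j i P * ((tvar j - tvar i) * dlt j i Q)"
    by (simp add: algebra_simps)
  also have "\<dots> = (P - S j i P) * Q + S j i P * (Q - S j i Q)" by (simp add: dlt_char)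
  also have "\<dots> = P * Q - S j i (P * Q)" by (simp add: S_mult algebra_simps)
  also have "\<dots> = (tvar j - tvar i) * dlt j i (P * Q)" by (simp add: dlt_char)
  finally show "(tvar j - tvar i) * dlt j i (P * Q) = (tvar j - tvar i) * (dlt j i P * Q + S j i P * dlt j i Q)" by simp
qed

lemma dlt_fixed: "i \<noteq> j \<Longrightarrow> S j i P = P \<Longrightarrow> dlt j i P = 0"
  by (rule tvar_cancel[of i j]) (simp_all add: dlt_char)

lemma dlt_mult_fixed: "i \<noteq> j \<Longrightarrow> S j i P = P \<Longrightarrow> dlt j i (P * X) = P * dlt j i X"
  by (simp add: dlt_leibniz dlt_fixed)

lemma dlt_tvar_same: "i \<noteq> j \<Longrightarrow> dlt j i (tvar j) = 1"
  by (rule tvar_cancel[of i j]) (simp_all add: dlt_char)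

lemma S_dlt_commute:
  assumes "b \<noteq> d" "b \<noteq> c" "a \<noteq> d" "c \<noteq> d"
  shows "S b a (dlt d c P) = dlt d c (S b a P)"
proof (rule tvar_cancel[of c d])
  show "c \<noteq> d" by fact
  have "(tvar d - tvar c) * S b a (dlt d c P) = S b a ((tvar d - tvar c) * dlt d c P)"
    using assms by (simp add: S_mult S_diff)
  also have "\<dots> = S b a P - S b a (S d c P)" by (simp add: dlt_char S_diff)
  also have "\<dots> = S b a P - S d c (S b a P)" using assms by (simp add: S_commute)
  also have "\<dots> = (tvar d - tvar c) * dlt d c (S b a P)" by (simp add: dlt_char)
  finally show "(tvar d - tvar c) * S b a (dlt d c P) = (tvar d - tvar c) * dlt d c (S b a P)" .
qed

lemma dlt_commute_distinct:
  assumes "b \<noteq> d" "b \<noteq> c" "a \<noteq> d" "c \<noteq> d" "a \<noteq> b"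
  shows "dlt b a (dlt d c P) = dlt d c (dlt b a P)"
proof (rule tvar_cancel[of a b])
  show "a \<noteq> b" by fact
  show "(tvar b - tvar a) * dlt b a (dlt d c P) = (tvar b - tvar a) * dlt d c (dlt b a P)"
  proof (rule tvar_cancel[of c d])
    show "c \<noteq> d" by fact
    have Sba: "S b a (tvar d - tvar c) = tvar d - tvar c" "S d c (tvar b - tvar a) = tvar b - tvar a"
      using assms by (simp_all add: S_diff)
    have "(tvar d - tvar c) * ((tvar b - tvar a) * dlt b a (dlt d c P))
        = (tvar d - tvar c) * (dlt d c P - S b a (dlt d c P))" by (simp only: dlt_char)
    also have "\<dots> = (tvar d - tvar c) * dlt d c P - S b a ((tvar d - tvar c) * dlt d c P)"
      by (simp add: S_mult Sba right_diff_distrib)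
    also have "\<dots> = P - S d c P - S b a (P - S d c P)" by (simp add: dlt_char)
    also have "\<dots> = P - S b a P - S d c (P - S b a P)"
      using assms by (simp add: S_diff S_commute)
    also have "\<dots> = (tvar b - tvar a) * dlt b a P - S d c ((tvar b - tvar a) * dlt b a P)"
      by (simp add: dlt_char)
    also have "\<dots> = (tvar b - tvar a) * (dlt b a P - S d c (dlt b a P))"
      by (simp add: S_mult Sba right_diff_distrib)
    also have "\<dots> = (tvar b - tvar a) * ((tvar d - tvar c) * dlt d c (dlt b a P))" by (simp only: dlt_char)
    also have "\<dots> = (tvar d - tvar c) * ((tvar b - tvar a) * dlt d c (dlt b a P))" by (simp add: mult_ac)
    finally show "(tvar d - tvar c) * ((tvar b - tvar a) * dlt b a (dlt d c P)) =
      (tvar d - tvar c) * ((tvar b - tvar a) * dlt d c (dlt b a P))" .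
  qed
qed

lemma dlt_commute_same:
  assumes "a \<noteq> b" "c \<noteq> b" "a \<noteq> c"
  shows "dlt b a (dlt b c P) = dlt b c (dlt b a P)"
proof -
  define X1 where "X1 = dlt b c P"
  define X2 where "X2 = dlt b a P"
  define Y1 where "Y1 = dlt b a X1"
  define Y2 where "Y2 = dlt b c X2"
  have e1: "(tvar b - tvar a) * Y1 = X1 - S b a X1" unfolding Y1_def by (rule dlt_char)
  have e2: "(tvar b - tvar c) * Y2 = X2 - S b c X2" unfolding Y2_def by (rule dlt_char)
  have e3: "(tvar b - tvar c) * X1 = P - S b c P" unfolding X1_def by (rule dlt_char)
  have e4: "(tvar b - tvar a) * X2 = P - S b a P" unfolding X2_def by (rule dlt_char)
  have e5: "(tvar a - tvar c) * S b a X1 = S b a P - S b c P"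
  proof -
    have "S b a ((tvar b - tvar c) * X1) = S b a (P - S b c P)" using e3 by simp
    then show ?thesis using assms by (simp add: S_mult S_diff S_SS1)
  qed
  have e6: "(tvar c - tvar a) * S b c X2 = S b c P - S b a P"
  proof -
    have "S b c ((tvar b - tvar a) * X2) = S b c (P - S b a P)" using e4 by simp
    then show ?thesis using assms by (simp add: S_mult S_diff S_SS1)
  qed
  have "Y1 = Y2"
  proof (rule tvar_cancel[of a b])
    show "a \<noteq> b" by fact
    show "(tvar b - tvar a) * Y1 = (tvar b - tvar a) * Y2"
    proof (rule tvar_cancel[of c b])
      show "c \<noteq> b" by fact
      show "(tvar b - tvar c) * ((tvar b - tvar a) * Y1) = (tvar b - tvar c) * ((tvar b - tvar a) * Y2)"
      proof (rule tvar_cancel[of c a])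
        show "c \<noteq> a" using assms by simp
        have "(tvar a - tvar c) * ((tvar b - tvar c) * ((tvar b - tvar a) * Y1))
            = (tvar a - tvar c) * ((tvar b - tvar c) * (X1 - S b a X1))" by (simp only: e1)
        also have "\<dots> = (tvar a - tvar c) * ((tvar b - tvar c) * X1) - (tvar b - tvar c) * ((tvar a - tvar c) * S b a X1)"
          by (simp add: algebra_simps)
        also have "\<dots> = (tvar a - tvar c) * (P - S b c P) - (tvar b - tvar c) * (S b a P - S b c P)"
          by (simp only: e3 e5)
        also have "\<dots> = (tvar a - tvar c) * (P - S b a P) + (tvar b - tvar a) * (S b c P - S b a P)"
          by (simp add: algebra_simps)
        also have "\<dots> = (tvar a - tvar c) * ((tvar b - tvar a) * X2) + (tvar b - tvar a) * ((tvar c - tvar a) * S b c X2)"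
          by (simp only: e4 e6)
        also have "\<dots> = (tvar a - tvar c) * ((tvar b - tvar a) * (X2 - S b c X2))"
          by (simp add: algebra_simps)
        also have "\<dots> = (tvar a - tvar c) * ((tvar b - tvar a) * ((tvar b - tvar c) * Y2))"
          by (simp only: e2)
        also have "\<dots> = (tvar a - tvar c) * ((tvar b - tvar c) * ((tvar b - tvar a) * Y2))"
          by (simp add: mult_ac)
        finally show "(tvar a - tvar c) * ((tvar b - tvar c) * ((tvar b - tvar a) * Y1)) =
          (tvar a - tvar c) * ((tvar b - tvar c) * ((tvar b - tvar a) * Y2))" .
      qed
    qed
  qed
  then show ?thesis by (simp add: Y1_def Y2_def X1_def X2_def)
qed

definition fT :: "'a::comm_ring_1 \<Rightarrow> 'a \<Rightarrow> 'a polyT \<Rightarrow> 'a polyT" where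
  "fT \<beta> \<alpha> u = u * u + C \<beta> * u + C \<alpha>"

definition Mop :: "'a::comm_ring_1 \<Rightarrow> 'a \<Rightarrow> nat \<Rightarrow> nat \<Rightarrow> 'a polyT \<Rightarrow> 'a polyT" where
  "Mop \<beta> \<alpha> a b X = tvar a * X + fT \<beta> \<alpha> (tvar a) * dlt b a X"

lemma S_fT: "S j i (fT \<beta> \<alpha> u) = fT \<beta> \<alpha> (S j i u)"
  by (simp add: fT_def S_add S_mult S_C)

lemma S_fT_tvar: "c \<noteq> j \<Longrightarrow> S j i (fT \<beta> \<alpha> (tvar c)) = fT \<beta> \<alpha> (tvar c)"
  by (simp add: S_fT)

lemma Mop_commute:
  assumes "a \<noteq> b" "c \<noteq> d" "a \<noteq> d" "c \<noteq> b"
  shows "Mop \<beta> \<alpha> a b (Mop \<beta> \<alpha> c d X) = Mop \<beta> \<alpha> c d (Mop \<beta> \<alpha> a b X)"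
proof -
  have dd: "dlt b a (dlt d c X) = dlt d c (dlt b a X)"
  proof (cases "b = d")
    case True
    show ?thesis
    proof (cases "a = c")
      case False then show ?thesis using True assms by (simp add: dlt_commute_same)
    qed (use True in simp)
  next
    case False then show ?thesis using assms by (simp add: dlt_commute_distinct)
  qed
  have "Mop \<beta> \<alpha> a b (Mop \<beta> \<alpha> c d X) = tvar a * tvar c * X + tvar a * fT \<beta> \<alpha> (tvar c) * dlt d c X
      + fT \<beta> \<alpha> (tvar a) * tvar c * dlt b a X + fT \<beta> \<alpha> (tvar a) * fT \<beta> \<alpha> (tvar c) * dlt b a (dlt d c X)"
    using assms by (simp add: Mop_def dlt_add dlt_mult_fixed S_fT_tvar) (simp add: algebra_simps)
  also have "\<dots> = Mop \<beta> \<alpha> c d (Mop \<beta> \<alpha> a b X)"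
    using assms by (simp add: Mop_def dlt_add dlt_mult_fixed S_fT_tvar) (simp add: algebra_simps dd)
  finally show ?thesis .
qed

lemma dlt_fT:
  assumes "i \<noteq> j"
  shows "dlt j i (fT \<beta> \<alpha> (tvar j)) = tvar i + tvar j + C \<beta>"
proof (rule tvar_cancel[OF assms])
  show "(tvar j - tvar i) * dlt j i (fT \<beta> \<alpha> (tvar j)) = (tvar j - tvar i) * (tvar i + tvar j + C \<beta>)"
    using assms by (simp only: dlt_char) (simp add: S_fT fT_def S_add S_mult S_C algebra_simps)
qed

lemma E_identity:
  assumes ij: "i \<noteq> j" and jk: "j \<noteq> k" and ik: "i \<noteq> k"
  shows "Mop \<beta> \<alpha> i j (Mop \<beta> \<alpha> j k R) - Mop \<beta> \<alpha> i j (Mop \<beta> \<alpha> i k R) - Mop \<beta> \<alpha> i k (Mop \<beta> \<alpha> j k R)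
         - C \<beta> * Mop \<beta> \<alpha> i k R - C \<alpha> * R = 0"
proof -
  let ?x = "tvar i :: 'a polyT" and ?y = "tvar j :: 'a polyT" and ?z = "tvar k :: 'a polyT"
  let ?f = "fT \<beta> \<alpha>"
  define U where "U = dlt k j R"
  define V where "V = dlt k i R"
  define W where "W = dlt k i U"
  define A where "A = dlt j i R"
  define B where "B = dlt j i U"
  define Cc where "Cc = dlt j i V"
  have Sx: "S j i ?x = ?x" using ij by simp
  have F2: "U - V = (?y - ?x) * W"
  proof (rule tvar_cancel[of i k])
    show "i \<noteq> k" by fact
    have w: "(?z - ?x) * W = U - S k i U" unfolding W_def by (rule dlt_char)
    have u: "(?z - ?y) * U = R - S k j R" unfolding U_def by (rule dlt_char)
    have v: "(?z - ?x) * V = R - S k i R" unfolding V_def by (rule dlt_char)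
    have su: "(?x - ?y) * S k i U = S k i R - S k j R"
    proof -
      have "S k i ((?z - ?y) * U) = S k i (R - S k j R)" using u by simp
      then show ?thesis using ij jk ik by (simp add: S_mult S_diff S_SS1)
    qed
    have "(?z - ?x) * ((?y - ?x) * W) = (?y - ?x) * ((?z - ?x) * W)" by (simp add: mult_ac)
    also have "\<dots> = (?y - ?x) * (U - S k i U)" by (simp only: w)
    also have "\<dots> = (?y - ?x) * U + (?x - ?y) * S k i U" by (simp add: algebra_simps)
    also have "\<dots> = (?y - ?x) * U + (S k i R - S k j R)" by (simp only: su)
    also have "\<dots> = (?z - ?y) * U + (?y - ?x) * U - (R - S k i R)" by (simp only: u) (simp add: algebra_simps)
    also have "\<dots> = (?z - ?x) * U - (?z - ?x) * V" by (simp only: v) (simp add: algebra_simps)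
    also have "\<dots> = (?z - ?x) * (U - V)" by (simp add: algebra_simps)
    finally show "(?z - ?x) * (U - V) = (?z - ?x) * ((?y - ?x) * W)" by simp
  qed
  have dyx: "dlt j i (?y - ?x) = 1"
    using ij by (simp add: dlt_diff dlt_tvar_same dlt_fixed)
  have F1: "B - Cc = W"
  proof -
    have "B - Cc = dlt j i (U - V)" using ij by (simp add: B_def Cc_def dlt_diff)
    also have "\<dots> = dlt j i ((?y - ?x) * W)" by (simp add: F2)
    also have "\<dots> = W" using ij by (simp add: dlt_leibniz dyx S_diff)
    finally show ?thesis .
  qed
  have Mjk: "Mop \<beta> \<alpha> j k R = ?y * R + ?f ?y * U" by (simp add: Mop_def U_def)
  have Mik: "Mop \<beta> \<alpha> i k R = ?x * R + ?f ?x * V" by (simp add: Mop_def V_def)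
  have 1: "Mop \<beta> \<alpha> i j (Mop \<beta> \<alpha> j k R) = ?x * (?y * R + ?f ?y * U) + ?f ?x * (R + ?x * A + (?x + ?y + C \<beta>) * U + ?f ?x * B)"
    unfolding Mjk using ij by (simp add: Mop_def dlt_add dlt_leibniz dlt_tvar_same dlt_fT S_fT A_def B_def add.assoc)
  have d2: "dlt j i (?x * R + ?f ?x * V) = ?x * A + ?f ?x * Cc"
    unfolding A_def Cc_def using ij by (simp add: dlt_add dlt_mult_fixed S_fT_tvar)
  have 2: "Mop \<beta> \<alpha> i j (Mop \<beta> \<alpha> i k R) = ?x * (?x * R + ?f ?x * V) + ?f ?x * (?x * A + ?f ?x * Cc)"
    unfolding Mik Mop_def[of _ _ i j] d2 by (rule refl)
  have 3: "Mop \<beta> \<alpha> i k (Mop \<beta> \<alpha> j k R) = ?x * (?y * R + ?f ?y * U) + ?f ?x * (?y * V + ?f ?y * W)"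
    unfolding Mjk using ik jk by (simp add: Mop_def dlt_add dlt_mult_fixed S_fT_tvar V_def W_def)
  have U: "U = V + (?y - ?x) * W" using F2 by (simp add: algebra_simps)
  have B: "B = Cc + W" using F1 by (simp add: algebra_simps)
  show ?thesis
    unfolding 1 2 3 by (simp only: Mik U B) (simp add: fT_def algebra_simps)
qed

definition linop :: "('a::comm_ring_1 polyT \<Rightarrow> 'a polyT) \<Rightarrow> bool" where
  "linop F \<longleftrightarrow> (\<forall>X Y. F (X + Y) = F X + F Y) \<and> (\<forall>c X. F (C c * X) = C c * F X)"

lemma linop_id: "linop id" by (simp add: linop_def)

lemma linop_comp: "linop F \<Longrightarrow> linop G \<Longrightarrow> linop (F \<circ> G)" by (simp add: linop_def)

lemma linop_funpow: "linop F \<Longrightarrow> linop (F ^^ n)"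
  by (induction n) (simp_all add: linop_id linop_comp)

lemma linop_add: "linop F \<Longrightarrow> F (X + Y) = F X + F Y" by (simp add: linop_def)
lemma linop_C: "linop F \<Longrightarrow> F (C c * X) = C c * F X" by (simp add: linop_def)
lemma linop_zero: "linop F \<Longrightarrow> F 0 = 0"
  using linop_add[of F 0 0] by simp
lemma linop_diff: "linop F \<Longrightarrow> F (X - Y) = F X - F Y"
  using linop_add[of F "X - Y" Y] by (simp add: algebra_simps)

lemma linop_Mop: "a \<noteq> b \<Longrightarrow> linop (Mop \<beta> \<alpha> a b)"
  unfolding linop_def Mop_def
  apply (intro conjI allI)
   apply (simp add: dlt_add algebra_simps)
  apply (simp add: dlt_mult_fixed S_C)
  apply (simp add: algebra_simps)
  done

definition cmp :: "('b \<Rightarrow> 'b) \<Rightarrow> ('b \<Rightarrow> 'b) \<Rightarrow> 'b \<Rightarrow> 'b" where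
  "cmp f g = f \<circ> g"

lemma cmp_apply: "cmp f g x = f (g x)" by (simp add: cmp_def)

definition commutes :: "('b \<Rightarrow> 'b) \<Rightarrow> ('b \<Rightarrow> 'b) \<Rightarrow> bool" where
  "commutes f g \<longleftrightarrow> (\<forall>X. f (g X) = g (f X))"

lemma commutes_id: "commutes f id" by (simp add: commutes_def)
lemma commutes_comp: "commutes f g \<Longrightarrow> commutes f h \<Longrightarrow> commutes f (g \<circ> h)" by (simp add: commutes_def)
lemma commutes_funpow: "commutes f g \<Longrightarrow> commutes f (g ^^ n)"
  by (induction n) (simp_all add: commutes_id commutes_comp)
lemma commutes_self: "commutes f f" by (simp add: commutes_def)

lemma commutes_cmp: "commutes f g \<Longrightarrow> commutes f h \<Longrightarrow> commutes f (cmp g h)" by (simp add: commutes_def cmp_apply)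
lemma linop_cmp: "linop F \<Longrightarrow> linop G \<Longrightarrow> linop (cmp F G)" by (simp add: linop_def cmp_apply)
lemma foldr_cmp_Cons: "List.foldr (\<lambda>s F. cmp (g s) F) (x # xs) id X = g x (List.foldr (\<lambda>s F. cmp (g s) F) xs id X)"
  by (simp add: cmp_apply)

lemma commutes_foldr:
  "(\<And>x. x \<in> set xs \<Longrightarrow> commutes f (g x)) \<Longrightarrow> commutes f (List.foldr (\<lambda>x F. cmp (g x) F) xs id)"
  by (induction xs) (simp_all add: commutes_id commutes_cmp)

lemma linop_foldr:
  "(\<And>x. x \<in> set xs \<Longrightarrow> linop (g x)) \<Longrightarrow> linop (List.foldr (\<lambda>x F. cmp (g x) F) xs id)"
  by (induction xs) (simp_all add: linop_id linop_cmp)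

lemma commutes_Mop:
  assumes "a \<noteq> b" "c \<noteq> d" "a \<noteq> d" "c \<noteq> b"
  shows "commutes (Mop \<beta> \<alpha> a b) (Mop \<beta> \<alpha> c d)"
  unfolding commutes_def using Mop_commute[OF assms] by blast

subsection \<open>The linear map L\<close>

definition Gop :: "'a::comm_ring_1 \<Rightarrow> 'a \<Rightarrow> monoX \<Rightarrow> nat \<Rightarrow> 'a polyT \<Rightarrow> 'a polyT" where
  "Gop \<beta> \<alpha> m l = List.foldr (\<lambda>s F. cmp (Mop \<beta> \<alpha> s l ^^ lkp m (s, l)) F) [1..<l] id"

definition Fm :: "'a::comm_ring_1 \<Rightarrow> 'a \<Rightarrow> monoX \<Rightarrow> nat list \<Rightarrow> 'a polyT \<Rightarrow> 'a polyT" where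
  "Fm \<beta> \<alpha> m xs = List.foldr (\<lambda>l F. cmp (Gop \<beta> \<alpha> m l) F) xs id"

definition Lm :: "'a::comm_ring_1 \<Rightarrow> 'a \<Rightarrow> nat \<Rightarrow> monoX \<Rightarrow> 'a polyT" where
  "Lm \<beta> \<alpha> n m = Fm \<beta> \<alpha> m [1..<Suc n] 1"

lemma linop_Gop: "linop (Gop \<beta> \<alpha> m l)"
  unfolding Gop_def by (rule linop_foldr) (auto intro: linop_funpow linop_Mop)

lemma linop_Fm: "linop (Fm \<beta> \<alpha> m xs)"
  unfolding Fm_def by (rule linop_foldr) (rule linop_Gop)

lemma commutes_Gop:
  assumes "a \<noteq> b" "b \<noteq> l" "a \<noteq> l" "l \<le> b"
  shows "commutes (Mop \<beta> \<alpha> a b) (Gop \<beta> \<alpha> m l)"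
  unfolding Gop_def
  by (rule commutes_foldr, rule commutes_funpow, rule commutes_Mop) (use assms in auto)

lemma commutes_Gop_same:
  assumes "a < b"
  shows "commutes (Mop \<beta> \<alpha> a b) (Gop \<beta> \<alpha> m b)"
  unfolding Gop_def
proof (rule commutes_foldr, rule commutes_funpow)
  fix s assume "s \<in> set [1..<b]"
  then show "commutes (Mop \<beta> \<alpha> a b) (Mop \<beta> \<alpha> s b)"
  proof (cases "s = a")
    case True then show ?thesis by (simp add: commutes_self)
  next
    case False then show ?thesis using \<open>s \<in> set [1..<b]\<close> assms by (intro commutes_Mop) auto
  qed
qed

lemma commutes_Fm:
  assumes "\<And>l. l \<in> set xs \<Longrightarrow> a \<noteq> l \<and> b \<noteq> l \<and> l \<le> b" "a \<noteq> b"
  shows "commutes (Mop \<beta> \<alpha> a b) (Fm \<beta> \<alpha> m xs)"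
  unfolding Fm_def by (rule commutes_foldr, rule commutes_Gop) (use assms in auto)

lemma Gop_add_other:
  assumes "b \<noteq> l"
  shows "Gop \<beta> \<alpha> (m + sgl (a, b) 1) l = Gop \<beta> \<alpha> m l"
  unfolding Gop_def using assms by (simp add: lookup_add lookup_single)

lemma Fm_add_other:
  assumes "b \<notin> set xs"
  shows "Fm \<beta> \<alpha> (m + sgl (a, b) 1) xs = Fm \<beta> \<alpha> m xs"
  unfolding Fm_def using assms by (induction xs) (auto simp: Gop_add_other[simplified])

lemma foldr_add_same:
  assumes "a \<in> set xs" "distinct xs"
    and comm: "\<And>s. s \<in> set xs \<Longrightarrow> commutes (Mop \<beta> \<alpha> a b) (Mop \<beta> \<alpha> s b)"
  shows "List.foldr (\<lambda>s F. cmp (Mop \<beta> \<alpha> s b ^^ lkp (m + sgl (a, b) 1) (s, b)) F) xs id X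
       = Mop \<beta> \<alpha> a b (List.foldr (\<lambda>s F. cmp (Mop \<beta> \<alpha> s b ^^ lkp m (s, b)) F) xs id X)"
  using assms
proof (induction xs arbitrary: X)
  case Nil then show ?case by simp
next
  case (Cons x xs)
  show ?case
  proof (cases "x = a")
    case True
    then have "a \<notin> set xs" using Cons.prems by simp
    then have eq: "\<And>s. s \<in> set xs \<Longrightarrow> lkp (m + sgl (a, b) 1) (s, b) = lkp m (s, b)"
      by (auto simp: lookup_add lookup_single when_def)
    have fe: "List.foldr (\<lambda>s F. cmp (Mop \<beta> \<alpha> s b ^^ lkp (m + sgl (a, b) 1) (s, b)) F) xs id
       = List.foldr (\<lambda>s F. cmp (Mop \<beta> \<alpha> s b ^^ lkp m (s, b)) F) xs id"
      by (rule List.foldr_cong) (simp_all only: eq)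
    have la: "lkp (m + sgl (a, b) 1) (a, b) = Suc (lkp m (a, b))"
      by (simp add: lookup_add lookup_single)
    show ?thesis
      by (simp only: foldr_cmp_Cons True fe la funpow.simps(2) o_apply)
  next
    case False
    then have a: "a \<in> set xs" using Cons.prems by simp
    have IH: "\<And>Y. List.foldr (\<lambda>s F. cmp (Mop \<beta> \<alpha> s b ^^ lkp (m + sgl (a, b) 1) (s, b)) F) xs id Y
       = Mop \<beta> \<alpha> a b (List.foldr (\<lambda>s F. cmp (Mop \<beta> \<alpha> s b ^^ lkp m (s, b)) F) xs id Y)"
      by (rule Cons.IH) (use Cons.prems a in auto)
    have c: "commutes (Mop \<beta> \<alpha> a b) (Mop \<beta> \<alpha> x b ^^ lkp m (x, b))"
      using Cons.prems by (intro commutes_funpow) simp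
    have lx: "lkp (m + sgl (a, b) 1) (x, b) = lkp m (x, b)"
      using False by (simp add: lookup_add lookup_single)
    show ?thesis using c
      by (simp only: foldr_cmp_Cons lx IH commutes_def)
  qed
qed

lemma Gop_add_same:
  assumes "1 \<le> a" "a < b"
  shows "Gop \<beta> \<alpha> (m + sgl (a, b) 1) b X = Gop \<beta> \<alpha> m b (Mop \<beta> \<alpha> a b X)"
proof -
  have "Gop \<beta> \<alpha> (m + sgl (a, b) 1) b X = Mop \<beta> \<alpha> a b (Gop \<beta> \<alpha> m b X)"
    unfolding Gop_def
  proof (rule foldr_add_same)
    show "a \<in> set [1..<b]" using assms by simp
    show "\<And>s. s \<in> set [1..<b] \<Longrightarrow> commutes (Mop \<beta> \<alpha> a b) (Mop \<beta> \<alpha> s b)"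
      using assms by (metis atLeastLessThan_iff commutes_Mop commutes_self nat_neq_iff set_upt)
  qed simp
  also have "\<dots> = Gop \<beta> \<alpha> m b (Mop \<beta> \<alpha> a b X)"
    using commutes_Gop_same[OF assms(2), of \<beta> \<alpha> m] by (simp add: commutes_def)
  finally show ?thesis .
qed

lemma upt_split3: "a \<le> b \<Longrightarrow> b \<le> c \<Longrightarrow> [a..<c] = [a..<b] @ [b..<c]"
  using upt_add_eq_append[of a b "c - b"] by simp

lemma Fm_append: "Fm \<beta> \<alpha> m (xs @ ys) X = Fm \<beta> \<alpha> m xs (Fm \<beta> \<alpha> m ys X)"
  unfolding Fm_def by (induction xs arbitrary: X) (simp_all add: cmp_apply)

lemma Fm_Cons: "Fm \<beta> \<alpha> m (x # xs) X = Gop \<beta> \<alpha> m x (Fm \<beta> \<alpha> m xs X)"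
  unfolding Fm_def by (simp add: cmp_apply)

lemma Lm_split:
  assumes "1 \<le> j" "j < k" "k \<le> n"
  shows "Lm \<beta> \<alpha> n m = Fm \<beta> \<alpha> m [1..<j] (Gop \<beta> \<alpha> m j (Fm \<beta> \<alpha> m [Suc j..<k]
            (Gop \<beta> \<alpha> m k (Fm \<beta> \<alpha> m [Suc k..<Suc n] 1))))"
proof -
  have "[1..<Suc n] = [1..<j] @ j # [Suc j..<k] @ k # [Suc k..<Suc n]"
  proof -
    have "[1..<Suc n] = [1..<j] @ [j..<Suc n]" using assms by (intro upt_split3) auto
    also have "[j..<Suc n] = j # [Suc j..<Suc n]" using assms by (intro upt_conv_Cons) auto
    also have "[Suc j..<Suc n] = [Suc j..<k] @ [k..<Suc n]" using assms by (intro upt_split3) auto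
    also have "[k..<Suc n] = k # [Suc k..<Suc n]" using assms by (intro upt_conv_Cons) auto
    finally show ?thesis .
  qed
  then show ?thesis by (simp add: Lm_def Fm_append Fm_Cons)
qed

lemma Lm_gen:
  assumes ij: "1 \<le> i" "i < j" and jk: "j < k" and kn: "k \<le> n"
  shows "Lm \<beta> \<alpha> n (m + sgl (i, j) 1 + sgl (j, k) 1) - Lm \<beta> \<alpha> n (m + sgl (i, k) 1 + sgl (i, j) 1)
       - Lm \<beta> \<alpha> n (m + sgl (i, k) 1 + sgl (j, k) 1) - C \<beta> * Lm \<beta> \<alpha> n (m + sgl (i, k) 1)
       - C \<alpha> * Lm \<beta> \<alpha> n m = 0"
proof -
  define T where "T = (\<lambda>X. Fm \<beta> \<alpha> m [1..<j] (Gop \<beta> \<alpha> m j X))"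
  define V where "V = Fm \<beta> \<alpha> m [Suc j..<k]"
  define W where "W = Fm \<beta> \<alpha> m [Suc k..<Suc n] 1"
  define R where "R = V (Gop \<beta> \<alpha> m k W)"
  have linT: "linop T" unfolding T_def
    using linop_comp[OF linop_Fm linop_Gop] by (simp add: comp_def)
  have VM: "\<And>a Y. a \<in> {i, j} \<Longrightarrow> V (Mop \<beta> \<alpha> a k Y) = Mop \<beta> \<alpha> a k (V Y)"
  proof -
    fix a Y assume a: "a \<in> {i, j}"
    have "commutes (Mop \<beta> \<alpha> a k) V" unfolding V_def
      by (rule commutes_Fm) (use a ij jk in auto)
    then show "V (Mop \<beta> \<alpha> a k Y) = Mop \<beta> \<alpha> a k (V Y)" by (simp add: commutes_def)
  qed
  have GM: "\<And>a Y. a \<in> {i, j} \<Longrightarrow> Gop \<beta> \<alpha> m k (Mop \<beta> \<alpha> a k Y) = Mop \<beta> \<alpha> a k (Gop \<beta> \<alpha> m k Y)"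
  proof -
    fix a Y assume a: "a \<in> {i, j}"
    have "commutes (Mop \<beta> \<alpha> a k) (Gop \<beta> \<alpha> m k)"
      by (rule commutes_Gop_same) (use a ij jk in auto)
    then show "Gop \<beta> \<alpha> m k (Mop \<beta> \<alpha> a k Y) = Mop \<beta> \<alpha> a k (Gop \<beta> \<alpha> m k Y)" by (simp add: commutes_def)
  qed
  have sp: "\<And>m'. Lm \<beta> \<alpha> n m' = Fm \<beta> \<alpha> m' [1..<j] (Gop \<beta> \<alpha> m' j (Fm \<beta> \<alpha> m' [Suc j..<k]
            (Gop \<beta> \<alpha> m' k (Fm \<beta> \<alpha> m' [Suc k..<Suc n] 1))))"
    by (rule Lm_split) (use ij jk kn in auto)
  have nin: "j \<notin> set [1..<j]" "k \<notin> set [1..<j]" "j \<notin> set [Suc j..<k]" "k \<notin> set [Suc j..<k]"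
     "j \<notin> set [Suc k..<Suc n]" "k \<notin> set [Suc k..<Suc n]" using jk by auto
  note FO = Fm_add_other[OF nin(1)] Fm_add_other[OF nin(2)] Fm_add_other[OF nin(3)]
      Fm_add_other[OF nin(4)] Fm_add_other[OF nin(5)] Fm_add_other[OF nin(6)]
  have kj: "k \<noteq> j" "j \<noteq> k" using jk by auto
  note GO = Gop_add_other[OF kj(1)] Gop_add_other[OF kj(2)]
  have GS: "Gop \<beta> \<alpha> (m' + sgl (i, j) 1) j X = Gop \<beta> \<alpha> m' j (Mop \<beta> \<alpha> i j X)"
      "Gop \<beta> \<alpha> (m' + sgl (i, k) 1) k X = Gop \<beta> \<alpha> m' k (Mop \<beta> \<alpha> i k X)"
      "Gop \<beta> \<alpha> (m' + sgl (j, k) 1) k X = Gop \<beta> \<alpha> m' k (Mop \<beta> \<alpha> j k X)" for m' X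
    using ij jk by - (rule Gop_add_same, simp, simp)+
  have L1: "Lm \<beta> \<alpha> n (m + sgl (i, j) 1 + sgl (j, k) 1) = T (Mop \<beta> \<alpha> i j (Mop \<beta> \<alpha> j k R))"
    unfolding sp T_def R_def W_def by (simp only: FO GO GS GM VM insertI1 insertI2 singletonI V_def[symmetric])
  have L2: "Lm \<beta> \<alpha> n (m + sgl (i, k) 1 + sgl (i, j) 1) = T (Mop \<beta> \<alpha> i j (Mop \<beta> \<alpha> i k R))"
    unfolding sp T_def R_def W_def by (simp only: FO GO GS GM VM insertI1 insertI2 singletonI V_def[symmetric])
  have L3: "Lm \<beta> \<alpha> n (m + sgl (i, k) 1 + sgl (j, k) 1) = T (Mop \<beta> \<alpha> i k (Mop \<beta> \<alpha> j k R))"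
    unfolding sp T_def R_def W_def by (simp only: FO GO GS GM VM insertI1 insertI2 singletonI V_def[symmetric])
  have L4: "Lm \<beta> \<alpha> n (m + sgl (i, k) 1) = T (Mop \<beta> \<alpha> i k R)"
    unfolding sp T_def R_def W_def by (simp only: FO GO GS GM VM insertI1 insertI2 singletonI V_def[symmetric])
  have L5: "Lm \<beta> \<alpha> n m = T R"
    unfolding sp T_def R_def W_def V_def by (rule refl)
  have "Lm \<beta> \<alpha> n (m + sgl (i, j) 1 + sgl (j, k) 1) - Lm \<beta> \<alpha> n (m + sgl (i, k) 1 + sgl (i, j) 1)
       - Lm \<beta> \<alpha> n (m + sgl (i, k) 1 + sgl (j, k) 1) - C \<beta> * Lm \<beta> \<alpha> n (m + sgl (i, k) 1)
       - C \<alpha> * Lm \<beta> \<alpha> n m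
      = T (Mop \<beta> \<alpha> i j (Mop \<beta> \<alpha> j k R) - Mop \<beta> \<alpha> i j (Mop \<beta> \<alpha> i k R) - Mop \<beta> \<alpha> i k (Mop \<beta> \<alpha> j k R)
         - C \<beta> * Mop \<beta> \<alpha> i k R - C \<alpha> * R)"
    unfolding L1 L2 L3 L4 L5 using linT by (simp add: linop_diff linop_C)
  also have "\<dots> = 0" using E_identity[of i j k \<beta> \<alpha> R] ij jk linT by (simp add: linop_zero)
  finally show ?thesis .
qed

definition Lx :: "'a::comm_ring_1 \<Rightarrow> 'a \<Rightarrow> nat \<Rightarrow> 'a polyX \<Rightarrow> 'a polyT" where
  "Lx \<beta> \<alpha> n P = (\<Sum>e\<in>keysP P. C (lkp P e) * Lm \<beta> \<alpha> n e)"

lemma C_add: "C (a + b) = C a + C b" by (simp add: C_def single_add)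
lemma C_mult: "C (a * b) = C a * C b" by (simp add: C_def mult_single)
lemma C_0: "C 0 = 0" by (simp add: C_def)

lemma Lx_superset:
  assumes "finite K" "keysP P \<subseteq> K"
  shows "Lx \<beta> \<alpha> n P = (\<Sum>e\<in>K. C (lkp P e) * Lm \<beta> \<alpha> n e)"
  unfolding Lx_def
  by (rule sum.mono_neutral_left) (use assms in \<open>auto simp: in_keys_iff C_0\<close>)

lemma Lx_add: "Lx \<beta> \<alpha> n (P + Q) = Lx \<beta> \<alpha> n P + Lx \<beta> \<alpha> n Q"
proof -
  let ?K = "keysP P \<union> keysP Q"
  have "Lx \<beta> \<alpha> n (P + Q) = (\<Sum>e\<in>?K. C (lkp (P+Q) e) * Lm \<beta> \<alpha> n e)"
    by (rule Lx_superset) (auto simp: keys_add)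
  also have "\<dots> = (\<Sum>e\<in>?K. C (lkp P e) * Lm \<beta> \<alpha> n e) + (\<Sum>e\<in>?K. C (lkp Q e) * Lm \<beta> \<alpha> n e)"
    by (simp add: lookup_add C_add sum.distrib distrib_right)
  also have "\<dots> = Lx \<beta> \<alpha> n P + Lx \<beta> \<alpha> n Q"
    by (subst (1 2) Lx_superset[where K="?K"]) auto
  finally show ?thesis .
qed

lemma Lx_zero [simp]: "Lx \<beta> \<alpha> n 0 = 0" by (simp add: Lx_def)

lemma Lx_single: "Lx \<beta> \<alpha> n (sgl e c) = C c * Lm \<beta> \<alpha> n e"
  by (simp add: Lx_def C_0)

lemma Lx_sum: "Lx \<beta> \<alpha> n (sum F A) = (\<Sum>x\<in>A. Lx \<beta> \<alpha> n (F x))"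
  by (induction A rule: infinite_finite_induct) (auto simp: Lx_add)

lemma Lx_uminus: "Lx \<beta> \<alpha> n (- P) = - Lx \<beta> \<alpha> n P"
  using Lx_add[of \<beta> \<alpha> n P "-P"] by (simp add: add_eq_0_iff2)

lemma Lx_diff: "Lx \<beta> \<alpha> n (P - Q) = Lx \<beta> \<alpha> n P - Lx \<beta> \<alpha> n Q"
  using Lx_add[of \<beta> \<alpha> n P "-Q"] Lx_uminus[of \<beta> \<alpha> n Q] by simp

lemma single_genJ:
  "sgl m c * genJ \<beta> \<alpha> (i, j, k) =
     sgl (m + sgl (i, j) 1 + sgl (j, k) 1) c - sgl (m + sgl (i, k) 1 + sgl (i, j) 1) c
     - sgl (m + sgl (i, k) 1 + sgl (j, k) 1) c - sgl (m + sgl (i, k) 1) (c * \<beta>) - sgl m (c * \<alpha>)"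
  by (simp add: genJ_def xvar_def constX_def algebra_simps mult_single add.assoc)

lemma Lx_single_genJ:
  assumes "1 \<le> i" "i < j" "j < k" "k \<le> n"
  shows "Lx \<beta> \<alpha> n (sgl m c * genJ \<beta> \<alpha> (i, j, k)) = 0"
proof -
  have "Lx \<beta> \<alpha> n (sgl m c * genJ \<beta> \<alpha> (i, j, k)) = C c * (Lm \<beta> \<alpha> n (m + sgl (i, j) 1 + sgl (j, k) 1) - Lm \<beta> \<alpha> n (m + sgl (i, k) 1 + sgl (i, j) 1)
       - Lm \<beta> \<alpha> n (m + sgl (i, k) 1 + sgl (j, k) 1) - C \<beta> * Lm \<beta> \<alpha> n (m + sgl (i, k) 1)
       - C \<alpha> * Lm \<beta> \<alpha> n m)"
    unfolding single_genJ by (simp only: Lx_diff Lx_single C_mult) (simp add: algebra_simps)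
  also have "\<dots> = 0" using Lm_gen[OF assms, of \<beta> \<alpha> m] by simp
  finally show ?thesis .
qed

lemma Lx_mult_genJ:
  assumes "t \<in> triples n"
  shows "Lx \<beta> \<alpha> n (Q * genJ \<beta> \<alpha> t) = 0"
proof -
  obtain i j k where t: "t = (i, j, k)" "1 \<le> i" "i < j" "j < k" "k \<le> n"
    using assms by (auto simp: triples_def)
  have "Q * genJ \<beta> \<alpha> t = (\<Sum>e\<in>keysP Q. sgl e (lkp Q e) * genJ \<beta> \<alpha> t)"
    by (subst poly_expand) (simp add: sum_distrib_right)
  then show ?thesis using t by (simp add: Lx_sum Lx_single_genJ)
qed

lemma Lx_idealJ:
  assumes "x \<in> idealJ n \<beta> \<alpha>"
  shows "Lx \<beta> \<alpha> n x = 0"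
proof -
  obtain c where "x = (\<Sum>t \<in> triples n. c t * genJ \<beta> \<alpha> t)"
    using assms by (auto simp: idealJ_def)
  then show ?thesis by (simp add: Lx_sum Lx_mult_genJ)
qed

subsection \<open>L agrees with D on pathless monomials\<close>

lemma Mop_fixed: "s \<noteq> l \<Longrightarrow> S l s P = P \<Longrightarrow> Mop \<beta> \<alpha> s l P = tvar s * P"
  by (simp add: Mop_def dlt_fixed)

lemma fixed_mult_tvar: "s \<noteq> l \<Longrightarrow> (\<forall>s'. S l s' P = P) \<Longrightarrow> (\<forall>s'. S l s' (tvar s * P) = tvar s * P)"
  by (simp add: S_mult)

lemma Mop_pow_fixed:
  assumes "s \<noteq> l" "\<forall>s'. S l s' P = P"
  shows "(Mop \<beta> \<alpha> s l ^^ c) P = tvar s ^ c * P \<and> (\<forall>s'. S l s' ((Mop \<beta> \<alpha> s l ^^ c) P) = (Mop \<beta> \<alpha> s l ^^ c) P)"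
proof (induction c)
  case 0 then show ?case using assms by simp
next
  case (Suc c)
  from Suc.IH have a: "(Mop \<beta> \<alpha> s l ^^ c) P = tvar s ^ c * P"
    and b: "\<forall>s'. S l s' ((Mop \<beta> \<alpha> s l ^^ c) P) = (Mop \<beta> \<alpha> s l ^^ c) P" by blast+
  have fx: "\<forall>s'. S l s' (tvar s ^ c * P) = tvar s ^ c * P" using b unfolding a .
  have "(Mop \<beta> \<alpha> s l ^^ Suc c) P = Mop \<beta> \<alpha> s l (tvar s ^ c * P)" using Suc by simp
  also have "\<dots> = tvar s * (tvar s ^ c * P)" using fx assms by (simp add: Mop_fixed)
  finally show ?case using fx assms by (simp add: S_mult mult.assoc)
qed

lemma foldr_Mop_fixed:
  assumes "\<forall>s\<in>set xs. s \<noteq> l" "\<forall>s'. S l s' P = P"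
  shows "List.foldr (\<lambda>s F. cmp (Mop \<beta> \<alpha> s l ^^ lkp m (s, l)) F) xs id P
           = prod_list (map (\<lambda>s. tvar s ^ lkp m (s, l)) xs) * P
        \<and> (\<forall>s'. S l s' (prod_list (map (\<lambda>s. tvar s ^ lkp m (s, l)) xs) * P) = prod_list (map (\<lambda>s. tvar s ^ lkp m (s, l)) xs) * P)"
  using assms(1)
proof (induction xs)
  case Nil then show ?case using assms(2) by simp
next
  case (Cons x xs)
  have ih: "List.foldr (\<lambda>s F. cmp (Mop \<beta> \<alpha> s l ^^ lkp m (s, l)) F) xs id P
           = prod_list (map (\<lambda>s. tvar s ^ lkp m (s, l)) xs) * P
        \<and> (\<forall>s'. S l s' (prod_list (map (\<lambda>s. tvar s ^ lkp m (s, l)) xs) * P) = prod_list (map (\<lambda>s. tvar s ^ lkp m (s, l)) xs) * P)"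
    by (rule Cons.IH) (use Cons.prems in auto)
  then have IH: "List.foldr (\<lambda>s F. cmp (Mop \<beta> \<alpha> s l ^^ lkp m (s, l)) F) xs id P
           = prod_list (map (\<lambda>s. tvar s ^ lkp m (s, l)) xs) * P"
    and fx: "\<forall>s'. S l s' (prod_list (map (\<lambda>s. tvar s ^ lkp m (s, l)) xs) * P) = prod_list (map (\<lambda>s. tvar s ^ lkp m (s, l)) xs) * P"
    by blast+
  have xl: "x \<noteq> l" using Cons.prems by simp
  note mp = Mop_pow_fixed[OF xl fx, where c = "lkp m (x, l)" and \<beta> = \<beta> and \<alpha> = \<alpha>]
  show ?case unfolding foldr_cmp_Cons IH conjunct1[OF mp]
    using conjunct2[OF mp] unfolding conjunct1[OF mp] by (simp add: mult.assoc)
qed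

lemma Gop_fixed:
  assumes "\<forall>s'. S l s' P = P"
  shows "Gop \<beta> \<alpha> m l P = (\<Prod>s\<in>{1..<l}. tvar s ^ lkp m (s, l)) * P"
proof -
  have "Gop \<beta> \<alpha> m l P = prod_list (map (\<lambda>s. tvar s ^ lkp m (s, l)) [1..<l]) * P"
    unfolding Gop_def using foldr_Mop_fixed[of "[1..<l]" l P] assms by auto
  also have "prod_list (map (\<lambda>s. tvar s ^ lkp m (s, l)) [1..<l]) = (\<Prod>s\<in>{1..<l}. tvar s ^ lkp m (s, l))"
    by (simp add: prod.distinct_set_conv_list[symmetric])
  finally show ?thesis .
qed

lemma foldr_Mop_zero:
  assumes "\<forall>s\<in>set xs. lkp m (s, l) = 0"
  shows "List.foldr (\<lambda>s F. cmp (Mop \<beta> \<alpha> s l ^^ lkp m (s, l)) F) xs id P = P"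
  using assms by (induction xs) (simp_all add: cmp_apply)

lemma Gop_zero:
  assumes "\<forall>s\<in>{1..<l}. lkp m (s, l) = 0"
  shows "Gop \<beta> \<alpha> m l P = (\<Prod>s\<in>{1..<l}. tvar s ^ lkp m (s, l)) * P"
proof -
  have "Gop \<beta> \<alpha> m l P = P" unfolding Gop_def by (rule foldr_Mop_zero) (use assms in auto)
  moreover have "(\<Prod>s\<in>{1..<l}. tvar s ^ lkp m (s, l)) = (1 :: 'a polyT)"
    using assms by (intro prod.neutral) simp
  ultimately show ?thesis by simp
qed

definition PP :: "nat \<Rightarrow> monoX \<Rightarrow> nat \<Rightarrow> 'a::comm_ring_1 polyT" where
  "PP n m l = (\<Prod>l'\<in>{l..n}. \<Prod>s\<in>{1..<l'}. tvar s ^ lkp m (s, l'))"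

lemma Fm_pathless:
  assumes pl: "pathless_mono n m" and l: "1 \<le> l" "l \<le> Suc n"
  shows "Fm \<beta> \<alpha> m [l..<Suc n] 1 = (PP n m l :: 'a::comm_ring_1 polyT)"
  using l
proof (induction "Suc n - l" arbitrary: l)
  case 0
  then have "l = Suc n" by simp
  then show ?case by (simp add: Fm_def PP_def)
next
  case (Suc d)
  then have ln: "l \<le> n" by simp
  have IH: "Fm \<beta> \<alpha> m [Suc l..<Suc n] 1 = (PP n m (Suc l) :: 'a polyT)"
    using Suc ln by simp
  have split: "[l..<Suc n] = l # [Suc l..<Suc n]" using ln by (simp add: upt_conv_Cons)
  have PPl: "PP n m l = (\<Prod>s\<in>{1..<l}. tvar s ^ lkp m (s, l)) * (PP n m (Suc l) :: 'a polyT)"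
    unfolding PP_def using ln by (simp add: prod.atLeast_Suc_atMost)
  have G: "Gop \<beta> \<alpha> m l (PP n m (Suc l)) = (\<Prod>s\<in>{1..<l}. tvar s ^ lkp m (s, l)) * (PP n m (Suc l) :: 'a polyT)"
  proof (cases "\<forall>s\<in>{1..<l}. lkp m (s, l) = 0")
    case True then show ?thesis by (rule Gop_zero)
  next
    case False
    then obtain s0 where s0: "1 \<le> s0" "s0 < l" "lkp m (s0, l) \<noteq> 0" by auto
    have out: "lkp m (l, l') = 0" if "l < l'" "l' \<le> n" for l'
      using pl s0 that unfolding pathless_mono_def by force
    show ?thesis
    proof (rule Gop_fixed, intro allI)
      fix s'
      have "S l s' (PP n m (Suc l) :: 'a polyT) = (\<Prod>l'\<in>{Suc l..n}. \<Prod>s\<in>{1..<l'}. S l s' (tvar s) ^ lkp m (s, l'))"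
        by (simp add: PP_def S_prod S_power)
      also have "\<dots> = PP n m (Suc l)"
        unfolding PP_def
      proof (rule prod.cong[OF refl], rule prod.cong[OF refl])
        fix l' s assume "l' \<in> {Suc l..n}" "s \<in> {1..<l'}"
        then show "S l s' (tvar s) ^ lkp m (s, l') = tvar s ^ lkp m (s, l')"
          using out[of l'] by (cases "s = l") auto
      qed
      finally show "S l s' (PP n m (Suc l)) = (PP n m (Suc l) :: 'a polyT)" .
    qed
  qed
  show ?case unfolding split Fm_Cons IH G PPl by (rule refl)
qed

lemma Lm_pathless:
  assumes pl: "pathless_mono n m" and ks: "keysP m \<subseteq> varsX n"
  shows "Lm \<beta> \<alpha> n m = (\<Prod>v\<in>keysP m. tvar (fst v) ^ lkp m v :: 'a::comm_ring_1 polyT)"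
proof -
  have "Lm \<beta> \<alpha> n m = (PP n m 1 :: 'a polyT)" unfolding Lm_def by (rule Fm_pathless[OF pl]) auto
  also have "\<dots> = (\<Prod>(l', s)\<in>(SIGMA l':{1..n}. {1..<l'}). tvar s ^ lkp m (s, l'))"
    unfolding PP_def by (rule prod.Sigma) auto
  also have "\<dots> = (\<Prod>v\<in>varsX n. tvar (fst v) ^ lkp m v)"
  proof (rule prod.reindex_bij_witness[of _ prod.swap prod.swap])
  qed (auto simp: varsX_def)
  also have "\<dots> = (\<Prod>v\<in>keysP m. tvar (fst v) ^ lkp m v)"
  proof (rule prod.mono_neutral_right)
    show "finite (varsX n)"
      by (rule finite_subset[of _ "{1..n} \<times> {1..n}"]) (auto simp: varsX_def)
  qed (use ks in \<open>auto simp: in_keys_iff\<close>)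
  finally show ?thesis .
qed

lemma Lx_D:
  assumes "inX n q" "pathless n q"
  shows "Lx \<beta> \<alpha> n q = D q"
  unfolding Lx_def D_def C_def
  by (rule sum.cong[OF refl]) (use assms in \<open>simp add: Lm_pathless inX_def pathless_def\<close>)

theorem theorem2p7:
  fixes \<alpha> \<beta> :: "'a::comm_ring_1" and n :: nat and p q1 q2 :: "'a polyX"
  assumes "n \<ge> 1"
    and "inX n p" and "inX n q1" and "inX n q2"
    and "pathless n q1" and "pathless n q2"
    and "p - q1 \<in> idealJ n \<beta> \<alpha>" and "p - q2 \<in> idealJ n \<beta> \<alpha>"
  shows "D q1 = D q2"
proof -
  have "Lx \<beta> \<alpha> n (p - q1) = 0" "Lx \<beta> \<alpha> n (p - q2) = 0"
    using assms(7,8) by (simp_all add: Lx_idealJ)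
  then have "Lx \<beta> \<alpha> n q1 = Lx \<beta> \<alpha> n q2" by (simp add: Lx_diff)
  then show ?thesis using assms by (simp add: Lx_D)
qed

end
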